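(* Let $A_1$ and $A_2$ be finite-dimensional simple evolution algebras over a field $\mathbb{K}$. If $\dim\mathfrak{Diag}(A_i)>0$ for some $i\in\{1,2\}$, then $A_1\otimes A_2$ is a simple evolution algebra.
   Context: An evolution algebra over $\mathbb{K}$ is a $\mathbb{K}$-algebra with a basis $B=\{e_1,\dots,e_n\}$ (natural basis) such that $e_ie_j=0$ for $i\ne j$. A $\mathbb{K}$-algebra is simple if $A^2\neq 0$ and its only ideals are $0$ and $A$. For a simple finite-dimensional evolution algebra, any two natural bases agree up to reordering and nonzero rescaling of their elements; the diagonal subspace is $\mathfrak{Diag}(A):=\sum_{e\in B}(eA)e$ for a natural basis $B$, independent of this choice. The tensor product $A_1\otimes A_2$ of evolution algebras with natural bases $\{a_i\}$, $\{b_p\}$ is the evolution algebra with natural basis $\{a_i\otimes b_p\}$ and product $(a\otimes b)(a'\otimes b')=aa'\otimes bb'$. *)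

theory Defs
  imports Complex_Main "HOL-Library.Function_Algebras"
begin

text \<open>A finite-dimensional evolution algebra over a field 'k with natural basis
  indexed by a finite type 'i is represented concretely on the coordinate space
  'i \<Rightarrow> 'k.  The structure matrix W gives e_i e_i = sum_k W k i e_k and
  e_i e_j = 0 for i \<noteq> j; bilinearity then forces the product below.\<close>

definition escale :: "'k::field \<Rightarrow> ('i \<Rightarrow> 'k) \<Rightarrow> ('i \<Rightarrow> 'k)" where
  "escale c x = (\<lambda>j. c * x j)"

definition ebasis :: "'i \<Rightarrow> ('i \<Rightarrow> 'k::field)" where
  "ebasis i = (\<lambda>j. if j = i then 1 else 0)"

definition evmul :: "('i::finite \<Rightarrow> 'i \<Rightarrow> 'k::field) \<Rightarrow> ('i \<Rightarrow> 'k) \<Rightarrow> ('i \<Rightarrow> 'k) \<Rightarrow> ('i \<Rightarrow> 'k)" where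
  "evmul W x y = (\<lambda>k. \<Sum>i\<in>UNIV. x i * y i * W k i)"

definition evo_ideal :: "('i::finite \<Rightarrow> 'i \<Rightarrow> 'k::field) \<Rightarrow> ('i \<Rightarrow> 'k) set \<Rightarrow> bool" where
  "evo_ideal W I \<longleftrightarrow> module.subspace escale I \<and>
     (\<forall>x\<in>I. \<forall>y. evmul W x y \<in> I \<and> evmul W y x \<in> I)"

definition evo_simple :: "('i::finite \<Rightarrow> 'i \<Rightarrow> 'k::field) \<Rightarrow> bool" where
  "evo_simple W \<longleftrightarrow> (\<exists>x y. evmul W x y \<noteq> 0) \<and>
     (\<forall>I. evo_ideal W I \<longrightarrow> I = {0} \<or> I = UNIV)"

definition evo_diag :: "('i::finite \<Rightarrow> 'i \<Rightarrow> 'k::field) \<Rightarrow> ('i \<Rightarrow> 'k) set" where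
  "evo_diag W = {\<Sum>j\<in>UNIV. f j | f. \<forall>j. \<exists>y. f j = evmul W (evmul W (ebasis j) y) (ebasis j)}"

definition evo_diag_dim :: "('i::finite \<Rightarrow> 'i \<Rightarrow> 'k::field) \<Rightarrow> nat" where
  "evo_diag_dim W = vector_space.dim escale (evo_diag W)"

text \<open>Tensor product: natural basis a_i \<otimes> b_p indexed by pairs, with
  (a_i \<otimes> b_p)^2 = a_i^2 \<otimes> b_p^2.\<close>
definition evo_tensor :: "('i::finite \<Rightarrow> 'i \<Rightarrow> 'k::field) \<Rightarrow> ('j::finite \<Rightarrow> 'j \<Rightarrow> 'k)
    \<Rightarrow> ('i \<times> 'j \<Rightarrow> 'i \<times> 'j \<Rightarrow> 'k)" where
  "evo_tensor W V = (\<lambda>(k, q) (i, p). W k i * V q p)"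

end

theory Submission
  imports Defs
begin

lemma module_escale: "module (escale :: 'k::field \<Rightarrow> ('i \<Rightarrow> 'k) \<Rightarrow> ('i \<Rightarrow> 'k))"
  by unfold_locales (auto simp: escale_def fun_eq_iff algebra_simps)

lemma vs_escale: "vector_space (escale :: 'k::field \<Rightarrow> ('i \<Rightarrow> 'k) \<Rightarrow> ('i \<Rightarrow> 'k))"
  using module_escale module_iff_vector_space by blast

lemma subspace_props:
  assumes "module.subspace escale (I :: ('i \<Rightarrow> 'k::field) set)"
  shows "0 \<in> I" "\<And>x y. x \<in> I \<Longrightarrow> y \<in> I \<Longrightarrow> x + y \<in> I" "\<And>c x. x \<in> I \<Longrightarrow> escale c x \<in> I"
  using module.subspace_0[OF module_escale assms] module.subspace_add[OF module_escale assms]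
    module.subspace_scale[OF module_escale assms] by auto

lemma subspaceI':
  assumes "0 \<in> (I :: ('i \<Rightarrow> 'k::field) set)" "\<And>x y. x \<in> I \<Longrightarrow> y \<in> I \<Longrightarrow> x + y \<in> I" "\<And>c x. x \<in> I \<Longrightarrow> escale c x \<in> I"
  shows "module.subspace escale I"
  using module.subspaceI[OF module_escale, of I, OF assms] .

lemma subspace_sum':
  assumes "module.subspace escale (I :: ('i \<Rightarrow> 'k::field) set)" "\<And>b. b \<in> A \<Longrightarrow> f b \<in> I"
  shows "sum f A \<in> I"
  using module.subspace_sum[OF module_escale assms] .

lemma dim_zero: "vector_space.dim (escale :: 'k::field \<Rightarrow> ('i \<Rightarrow> 'k) \<Rightarrow> ('i \<Rightarrow> 'k)) {0} = 0"
proof -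
  have "{0} \<subseteq> module.span (escale :: 'k::field \<Rightarrow> ('i \<Rightarrow> 'k) \<Rightarrow> ('i \<Rightarrow> 'k)) {}"
    using module.span_zero[OF module_escale] by blast
  from vector_space.dim_le_card[OF vs_escale this] show ?thesis by simp
qed

lemma sum_app: "(sum f A) j = (\<Sum>a\<in>A. f a j)"
  by (induct A rule: infinite_finite_induct) auto

lemma evmul_ebasis: "evmul W x (ebasis b) = (\<lambda>r. x b * W r b)"
proof
  fix r
  have "evmul W x (ebasis b) r = (\<Sum>i\<in>UNIV. if i = b then x b * W r b else 0)"
    unfolding evmul_def ebasis_def by (intro sum.cong) auto
  then show "evmul W x (ebasis b) r = x b * W r b" by simp
qed

lemma evmul_comm: "evmul W x y = evmul W y x"
  by (simp add: evmul_def mult.commute)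

lemma evmul_ebasis': "evmul W (ebasis b) x = (\<lambda>r. x b * W r b)"
  by (subst evmul_comm) (rule evmul_ebasis)

lemma ebasis_nz: "ebasis b \<noteq> (0 :: 'i \<Rightarrow> 'k::field)"
  by (auto simp: ebasis_def fun_eq_iff)

lemma expand_basis: "(\<Sum>b\<in>UNIV. escale (x b) (ebasis b)) = (x :: 'i::finite \<Rightarrow> 'k::field)"
proof
  fix j
  have "(\<Sum>b\<in>UNIV. escale (x b) (ebasis b)) j = (\<Sum>b\<in>UNIV. if b = j then x j else 0)"
    unfolding sum_app escale_def ebasis_def by (intro sum.cong) auto
  then show "(\<Sum>b\<in>UNIV. escale (x b) (ebasis b)) j = x j" by simp
qed

definition mulvec :: "('i::finite \<Rightarrow> 'i \<Rightarrow> 'k::field) \<Rightarrow> ('i \<Rightarrow> 'k) \<Rightarrow> ('i \<Rightarrow> 'k)" where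
  "mulvec W x = (\<lambda>k. \<Sum>i\<in>UNIV. W k i * x i)"

lemma evmul_mulvec: "evmul W x y = mulvec W (\<lambda>i. x i * y i)"
  by (simp add: evmul_def mulvec_def mult.commute)

lemma simple_ideal: "evo_simple W \<Longrightarrow> evo_ideal W I \<Longrightarrow> I = {0} \<or> I = UNIV"
  unfolding evo_simple_def by blast

lemma simple_ideal_UNIV: "evo_simple W \<Longrightarrow> evo_ideal W I \<Longrightarrow> ebasis i \<in> I \<Longrightarrow> I = UNIV"
  using simple_ideal ebasis_nz by (metis singletonD)

lemma simple_surj:
  assumes "evo_simple W"
  shows "\<exists>x. mulvec W x = z"
proof -
  have id: "evo_ideal W (range (mulvec W))"
    unfolding evo_ideal_def
  proof (intro conjI ballI allI subspaceI')
    show "0 \<in> range (mulvec W)" by (rule range_eqI[of _ _ 0]) (simp add: mulvec_def fun_eq_iff)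
    fix x y assume "x \<in> range (mulvec W)" "y \<in> range (mulvec W)"
    then obtain a b where "x = mulvec W a" "y = mulvec W b" by auto
    then show "x + y \<in> range (mulvec W)"
      by (intro range_eqI[of _ _ "a + b"]) (simp add: mulvec_def fun_eq_iff algebra_simps sum.distrib)
  next
    fix c x assume "x \<in> range (mulvec W)"
    then obtain a where "x = mulvec W a" by auto
    then show "escale c x \<in> range (mulvec W)"
      by (intro range_eqI[of _ _ "escale c a"]) (simp add: mulvec_def escale_def fun_eq_iff algebra_simps sum_distrib_left)
  next
    fix x y
    show "evmul W x y \<in> range (mulvec W)" "evmul W y x \<in> range (mulvec W)"
      by (simp_all add: evmul_mulvec)
  qed
  from assms obtain x y where "evmul W x y \<noteq> 0" unfolding evo_simple_def by blast
  then have "range (mulvec W) \<noteq> {0}" by (auto simp: evmul_mulvec)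
  with assms id have "range (mulvec W) = UNIV" unfolding evo_simple_def by blast
  then show ?thesis by (metis UNIV_I imageE)
qed

lemma simple_col:
  fixes W :: "'i::finite \<Rightarrow> 'i \<Rightarrow> 'k::field"
  assumes "evo_simple W"
  shows "\<exists>k. W k i \<noteq> 0"
proof (rule ccontr)
  assume "\<not> ?thesis"
  then have z: "\<And>k. W k i = 0" by blast
  let ?I = "{x :: 'i \<Rightarrow> 'k. \<forall>j. j \<noteq> i \<longrightarrow> x j = 0}"
  have ev0: "evmul W x y = 0" "evmul W y x = 0" if "\<forall>j. j \<noteq> i \<longrightarrow> x j = 0" for x y
    using that z by (auto simp: evmul_def fun_eq_iff intro!: sum.neutral) (metis mult_zero_left)+
  have idl: "evo_ideal W ?I"
    unfolding evo_ideal_def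
    by (intro conjI ballI allI subspaceI') (auto simp: escale_def ev0)
  have ebi: "ebasis i \<in> ?I" by (auto simp: ebasis_def)
  have U: "?I = UNIV" by (rule simple_ideal_UNIV[OF assms idl ebi])
  have all: "j = i" for j
  proof (rule ccontr)
    assume "j \<noteq> i"
    moreover have "ebasis j \<in> ?I" using U by blast
    ultimately have "ebasis j j = (0::'k)" by blast
    then show False by (simp add: ebasis_def)
  qed
  have W0: "W k j = 0" for k j
  proof -
    have "j = i" by (rule all)
    then show ?thesis using z by simp
  qed
  have "W = (\<lambda>_ _. 0)" using W0 by (intro ext) simp
  with assms show False unfolding evo_simple_def evmul_def by auto
qed

definition gr :: "('i \<Rightarrow> 'i \<Rightarrow> 'k::zero) \<Rightarrow> ('i \<times> 'i) set" where
  "gr W = {(j, k). W k j \<noteq> 0}"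

lemma simple_conn:
  fixes W :: "'i::finite \<Rightarrow> 'i \<Rightarrow> 'k::field"
  assumes "evo_simple W"
  shows "(i, k) \<in> (gr W)\<^sup>*"
proof -
  let ?I = "{x :: 'i \<Rightarrow> 'k. \<forall>k. x k \<noteq> 0 \<longrightarrow> (i, k) \<in> (gr W)\<^sup>*}"
  have cl1: "evmul W x y \<in> ?I" if "x \<in> ?I" for x y
  proof (intro CollectI allI impI)
    fix k assume "evmul W x y k \<noteq> 0"
    then have "(\<Sum>j\<in>UNIV. x j * y j * W k j) \<noteq> 0" by (simp add: evmul_def)
    then obtain j where "j \<in> UNIV" "x j * y j * W k j \<noteq> 0"
      by (rule sum.not_neutral_contains_not_neutral)
    then have "x j \<noteq> 0" "W k j \<noteq> 0" by auto
    from that \<open>x j \<noteq> 0\<close> have "(i, j) \<in> (gr W)\<^sup>*" by simp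
    moreover have "(j, k) \<in> gr W" using \<open>W k j \<noteq> 0\<close> by (simp add: gr_def)
    ultimately show "(i, k) \<in> (gr W)\<^sup>*" by (rule rtrancl_into_rtrancl)
  qed
  have cl2: "evmul W y x = evmul W x y" for x y
    by (simp add: evmul_def mult.commute)
  have idl: "evo_ideal W ?I"
    unfolding evo_ideal_def
  proof (intro conjI ballI allI subspaceI')
    show "0 \<in> ?I" by simp
  next
    fix x y assume xy: "x \<in> ?I" "y \<in> ?I"
    show "x + y \<in> ?I"
    proof (intro CollectI allI impI)
      fix k assume "(x + y) k \<noteq> 0"
      then have "x k \<noteq> 0 \<or> y k \<noteq> 0" by auto
      then show "(i, k) \<in> (gr W)\<^sup>*" using xy by blast
    qed
  next
    fix c x assume x: "x \<in> ?I"
    show "escale c x \<in> ?I"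
    proof (intro CollectI allI impI)
      fix k assume "escale c x k \<noteq> 0"
      then have "x k \<noteq> 0" by (auto simp: escale_def)
      then show "(i, k) \<in> (gr W)\<^sup>*" using x by blast
    qed
  next
    fix x y assume x: "x \<in> ?I"
    show "evmul W x y \<in> ?I" using cl1[OF x] .
    show "evmul W y x \<in> ?I" by (subst cl2) (rule cl1[OF x])
  qed
  have ebi: "ebasis i \<in> ?I" by (auto simp: ebasis_def)
  have "?I = UNIV" by (rule simple_ideal_UNIV[OF assms idl ebi])
  then have "ebasis k \<in> ?I" by blast
  then show ?thesis by (auto simp: ebasis_def)
qed

lemma simple_loop:
  assumes "evo_simple W"
  shows "(i, i) \<in> (gr W)\<^sup>+"
proof -
  obtain k where "W k i \<noteq> 0" using simple_col[OF assms] by blast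
  then have "(i, k) \<in> gr W" by (simp add: gr_def)
  moreover have "(k, i) \<in> (gr W)\<^sup>*" by (rule simple_conn[OF assms])
  ultimately show ?thesis by auto
qed

lemma pow_loop: "(j, j) \<in> R ^^ c \<Longrightarrow> (j, j) \<in> R ^^ (c * t)"
proof (induction t)
  case 0 then show ?case by simp
next
  case (Suc t)
  then have "(j, j) \<in> R ^^ c O R ^^ (c * t)" by blast
  then show ?case by (simp add: relpow_add[symmetric])
qed

lemma recurrent:
  assumes "(a, b) \<in> R\<^sup>*" "(b, b) \<in> R\<^sup>+"
  shows "\<exists>n\<ge>N. (a, b) \<in> R ^^ n"
proof -
  obtain d where d: "(a, b) \<in> R ^^ d" using assms(1) rtrancl_power by blast
  obtain c where c: "c > 0" "(b, b) \<in> R ^^ c" using assms(2) trancl_power by blast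
  have "(b, b) \<in> R ^^ (c * N)" using pow_loop[OF c(2)] .
  with d have "(a, b) \<in> R ^^ (d + c * N)" by (auto simp: relpow_add)
  moreover have "d + c * N \<ge> N" using c(1) by (simp add: trans_le_add2)
  ultimately show ?thesis by blast
qed

lemma aperiodic:
  assumes "(a, j) \<in> R\<^sup>*" "(j, b) \<in> R\<^sup>*" "(j, j) \<in> R"
  shows "\<exists>N. \<forall>n\<ge>N. (a, b) \<in> R ^^ n"
proof -
  obtain d1 where d1: "(a, j) \<in> R ^^ d1" using assms(1) rtrancl_power by blast
  obtain d2 where d2: "(j, b) \<in> R ^^ d2" using assms(2) rtrancl_power by blast
  have "(a, b) \<in> R ^^ n" if "n \<ge> d1 + d2" for n
  proof -
    have "(j, j) \<in> R ^^ (1 * (n - d1 - d2))" using pow_loop[where c=1 and t="n - d1 - d2"] assms(3) by simp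
    then have "(a, b) \<in> R ^^ (d1 + (n - d1 - d2) + d2)" using d1 d2 by (auto simp: relpow_add)
    moreover have "d1 + (n - d1 - d2) + d2 = n" using that by simp
    ultimately show ?thesis by simp
  qed
  then show ?thesis by blast
qed

definition prodrel :: "('a \<times> 'a) set \<Rightarrow> ('b \<times> 'b) set \<Rightarrow> (('a \<times> 'b) \<times> ('a \<times> 'b)) set" where
  "prodrel E F = {((a, c), (b, d)). (a, b) \<in> E \<and> (c, d) \<in> F}"

lemma prod_pow: "(a, b) \<in> E ^^ n \<Longrightarrow> (c, d) \<in> F ^^ n \<Longrightarrow> ((a, c), (b, d)) \<in> (prodrel E F) ^^ n"
proof (induction n arbitrary: b d)
  case 0 then show ?case by simp
next
  case (Suc n)
  from Suc.prems(1) obtain b' where b': "(a, b') \<in> E ^^ n" "(b', b) \<in> E" by (rule relpow_Suc_E)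
  from Suc.prems(2) obtain d' where d': "(c, d') \<in> F ^^ n" "(d', d) \<in> F" by (rule relpow_Suc_E)
  show ?case
    by (rule relpow_Suc_I[OF Suc.IH[OF b'(1) d'(1)]]) (simp add: prodrel_def b'(2) d'(2))
qed

lemma prod_conn:
  assumes "(\<exists>N. \<forall>n\<ge>N. (a, b) \<in> E ^^ n) \<and> (\<forall>N. \<exists>n\<ge>N. (c, d) \<in> F ^^ n) \<or>
           (\<forall>N. \<exists>n\<ge>N. (a, b) \<in> E ^^ n) \<and> (\<exists>N. \<forall>n\<ge>N. (c, d) \<in> F ^^ n)"
  shows "((a, c), (b, d)) \<in> (prodrel E F)\<^sup>*"
proof -
  from assms obtain n where "(a, b) \<in> E ^^ n" "(c, d) \<in> F ^^ n" by blast
  from prod_pow[OF this] show ?thesis using rtrancl_power by blast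
qed

lemma diag_loop:
  fixes W :: "'i::finite \<Rightarrow> 'i \<Rightarrow> 'k::field"
  assumes "evo_diag_dim W > 0"
  shows "\<exists>j. W j j \<noteq> 0"
proof (rule ccontr)
  assume "\<not> ?thesis"
  then have z: "\<And>j. W j j = 0" by blast
  have "evo_diag W = {0}"
  proof -
    have "f j = 0" if fj: "\<forall>j. \<exists>y. f j = evmul W (evmul W (ebasis j) y) (ebasis j)" for f j
    proof -
      obtain y where "f j = evmul W (evmul W (ebasis j) y) (ebasis j)" using fj by blast
      then show ?thesis by (simp add: evmul_ebasis evmul_ebasis' fun_eq_iff z)
    qed
    note f0 = this
    have "x = 0" if "x \<in> evo_diag W" for x
    proof -
      from that obtain f where x: "x = (\<Sum>j\<in>UNIV. f j)"
        and fj: "\<forall>j. \<exists>y. f j = evmul W (evmul W (ebasis j) y) (ebasis j)"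
        unfolding evo_diag_def by blast
      have "f j = 0" for j by (rule f0[OF fj])
      then show "x = 0" using x by simp
    qed
    then have "evo_diag W \<subseteq> {0}" by blast
    moreover have "0 \<in> evo_diag W"
    proof -
      have e0: "(0::'i\<Rightarrow>'k) = evmul W (evmul W (ebasis j) 0) (ebasis j)" for j
        by (simp add: evmul_ebasis evmul_ebasis' fun_eq_iff)
      have "(0::'i\<Rightarrow>'k) = (\<Sum>j\<in>UNIV. (\<lambda>_. 0::'i\<Rightarrow>'k) j) \<and>
          (\<forall>j. \<exists>y. (\<lambda>_. 0::'i\<Rightarrow>'k) j = evmul W (evmul W (ebasis j) y) (ebasis j))"
        using e0 by auto
      then show ?thesis unfolding evo_diag_def by blast
    qed
    ultimately show ?thesis by blast
  qed
  with assms show False unfolding evo_diag_dim_def by (simp add: dim_zero)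
qed

lemma gr_tensor: "gr (evo_tensor W V) = prodrel (gr W) (gr V)"
  by (auto simp: gr_def prodrel_def evo_tensor_def)

lemma mulvec_tensor:
  "mulvec (evo_tensor W V) (\<lambda>(i, p). u i * v p) = (\<lambda>(k, q). mulvec W u k * mulvec V v q)"
proof (intro ext, clarify)
  fix k q
  have "mulvec W u k * mulvec V v q = (\<Sum>i\<in>UNIV. \<Sum>p\<in>UNIV. (W k i * u i) * (V q p * v p))"
    unfolding mulvec_def by (rule sum_product)
  also have "\<dots> = (\<Sum>(i, p)\<in>UNIV \<times> UNIV. (W k i * u i) * (V q p * v p))"
    by (rule sum.cartesian_product)
  also have "\<dots> = mulvec (evo_tensor W V) (\<lambda>(i, p). u i * v p) (k, q)"
    unfolding mulvec_def evo_tensor_def UNIV_Times_UNIV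
    by (intro sum.cong) (auto simp: algebra_simps)
  finally show "mulvec (evo_tensor W V) (\<lambda>(i, p). u i * v p) (k, q) = mulvec W u k * mulvec V v q" ..
qed

theorem corollary4p4:
  fixes W :: "'i::finite \<Rightarrow> 'i \<Rightarrow> 'k::field"
    and V :: "'j::finite \<Rightarrow> 'j \<Rightarrow> 'k"
  assumes "evo_simple W" and "evo_simple V"
    and "evo_diag_dim W > 0 \<or> evo_diag_dim V > 0"
  shows "evo_simple (evo_tensor W V)"
proof -
  let ?T = "evo_tensor W V"
  have conn: "(x, y) \<in> (gr ?T)\<^sup>*" for x y
  proof -
    obtain a c where x: "x = (a, c)" by fastforce
    obtain b d where y: "y = (b, d)" by fastforce
    have rW: "\<forall>N. \<exists>n\<ge>N. (a, b) \<in> (gr W) ^^ n"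
      using recurrent[OF simple_conn[OF assms(1)] simple_loop[OF assms(1)]] by blast
    have rV: "\<forall>N. \<exists>n\<ge>N. (c, d) \<in> (gr V) ^^ n"
      using recurrent[OF simple_conn[OF assms(2)] simple_loop[OF assms(2)]] by blast
    have "(\<exists>N. \<forall>n\<ge>N. (a, b) \<in> (gr W) ^^ n) \<or> (\<exists>N. \<forall>n\<ge>N. (c, d) \<in> (gr V) ^^ n)"
      using assms(3)
    proof (elim disjE)
      assume "evo_diag_dim W > 0"
      then obtain j where "W j j \<noteq> 0" using diag_loop by blast
      then have "(j, j) \<in> gr W" by (simp add: gr_def)
      then show ?thesis using aperiodic[OF simple_conn[OF assms(1)] simple_conn[OF assms(1)]] by blast
    next
      assume "evo_diag_dim V > 0"
      then obtain j where "V j j \<noteq> 0" using diag_loop by blast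
      then have "(j, j) \<in> gr V" by (simp add: gr_def)
      then show ?thesis using aperiodic[OF simple_conn[OF assms(2)] simple_conn[OF assms(2)]] by blast
    qed
    then have "((a, c), (b, d)) \<in> (prodrel (gr W) (gr V))\<^sup>*"
      using rW rV by (intro prod_conn) blast
    then show ?thesis unfolding x y gr_tensor .
  qed
  have eb: "\<exists>w. mulvec ?T w = ebasis (k, q)" for k q
  proof -
    obtain u where u: "mulvec W u = ebasis k" using simple_surj[OF assms(1)] by blast
    obtain v where v: "mulvec V v = ebasis q" using simple_surj[OF assms(2)] by blast
    have "mulvec ?T (\<lambda>(i, p). u i * v p) = ebasis (k, q)"
      unfolding mulvec_tensor u v by (auto simp: ebasis_def fun_eq_iff)
    then show ?thesis by blast
  qed
  have nz: "\<exists>x y. evmul ?T x y \<noteq> 0"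
  proof -
    obtain w where "mulvec ?T w = ebasis (undefined, undefined)" using eb by blast
    then have "evmul ?T w (\<lambda>_. 1) \<noteq> 0" using ebasis_nz by (simp add: evmul_mulvec)
    then show ?thesis by blast
  qed
  have "I = {0} \<or> I = UNIV" if I: "evo_ideal ?T I" for I
  proof (cases "I = {0}")
    case True then show ?thesis by (rule disjI1)
  next
    case False
    then have "I \<noteq> {0}" .
    have sub: "module.subspace escale I" and mul: "\<And>x y. x \<in> I \<Longrightarrow> evmul ?T x y \<in> I"
      using I unfolding evo_ideal_def by blast+
    note sp = subspace_props[OF sub]
    have "0 \<in> I" by (rule sp(1))
    have "\<exists>x\<in>I. x \<noteq> 0"
    proof (rule ccontr)
      assume "\<not> (\<exists>x\<in>I. x \<noteq> 0)"
      then have "I \<subseteq> {0}" by blast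
      with \<open>0 \<in> I\<close> have "I = {0}" by blast
      with False show False by contradiction
    qed
    then obtain x where x: "x \<in> I" "x \<noteq> 0" by blast
    then obtain a0 where a0: "x a0 \<noteq> 0" by (auto simp: fun_eq_iff)
    define col where "col a = (\<lambda>r. ?T r a)" for a
    have scl: "col b \<in> I" if "escale c (col b) \<in> I" "c \<noteq> 0" for b c
    proof -
      have "escale (inverse c) (escale c (col b)) \<in> I" using sp(3) that(1) .
      moreover have "escale (inverse c) (escale c (col b)) = col b"
        using that(2) by (simp add: escale_def fun_eq_iff field_simps)
      ultimately show ?thesis by simp
    qed
    have "escale (x a0) (col a0) \<in> I"
      using mul[OF x(1), of "ebasis a0"] by (simp add: evmul_ebasis escale_def col_def)
    then have c0: "col a0 \<in> I" by (rule scl[OF _ a0])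
    have allcol: "col b \<in> I" for b
    proof -
      have "(a0, b) \<in> (gr ?T)\<^sup>*" by (rule conn)
      then show ?thesis
      proof (induction rule: rtrancl_induct)
        case base then show ?case by (rule c0)
      next
        case (step b c)
        have "evmul ?T (col b) (ebasis c) = escale (?T c b) (col c)"
          by (simp add: evmul_ebasis escale_def col_def)
        then have "escale (?T c b) (col c) \<in> I" using mul[OF step.IH, of "ebasis c"] by simp
        moreover have "?T c b \<noteq> 0" using step.hyps(2) by (simp add: gr_def)
        ultimately show ?case by (rule scl)
      qed
    qed
    have mv: "mulvec ?T w \<in> I" for w
    proof -
      have "mulvec ?T w = (\<Sum>b\<in>UNIV. escale (w b) (col b))"
        by (simp add: fun_eq_iff sum_app mulvec_def escale_def col_def mult.commute)
      also have "\<dots> \<in> I" by (rule subspace_sum'[OF sub]) (rule sp(3), rule allcol)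
      finally show ?thesis .
    qed
    have "z \<in> I" for z
    proof -
      have "(\<Sum>b\<in>UNIV. escale (z b) (ebasis b)) \<in> I"
      proof (rule subspace_sum'[OF sub], rule sp(3))
        fix b :: "'i \<times> 'j"
        obtain k q where kq: "b = (k, q)" by fastforce
        obtain w where "mulvec ?T w = ebasis (k, q)" using eb by blast
        then have "ebasis (k, q) \<in> I" using mv[of w] by simp
        then show "ebasis b \<in> I" using kq by simp
      qed
      then show ?thesis by (simp add: expand_basis)
    qed
    then have "UNIV = I" by (rule UNIV_eq_I)
    then show ?thesis by (intro disjI2) (rule sym)
  qed
  note idealfact = this
  show ?thesis
  proof (unfold evo_simple_def, intro conjI allI impI)
    show "\<exists>x y. evmul ?T x y \<noteq> 0" by (rule nz)
  next
    fix I assume "evo_ideal ?T I"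
    then show "I = {0} \<or> I = UNIV" by (rule idealfact)
  qed
qed

end
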